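(* Let $D$ be an integral domain, $W$ a multiplicative submonoid of $D$, and $0\neq x\in D$. Set $\mathfrak p(W):=\bigcap_{f\in W\setminus\{0\}}\mathfrak p_f\subseteq R(D)$. Then (1) $\mathfrak p(W)$ is a prime ideal of $R(D)$, and (2) $\frac1x\notin\mathfrak p(W)$ if and only if $x\in G(W)$.
   Context: For an integral domain $D$ with fraction field $F$, the reciprocal complement $R(D)$ is the subring of $F$ generated by all $1/d$, $d\in D\setminus\{0\}$. For nonzero $f\in D$, $\mathfrak p_f$ denotes the unique prime ideal of $R(D)$ maximal with respect to not containing $1/f$. A factroid of $D$ is an additive subgroup $H$ of $D$ such that whenever $f,g\in D\setminus\{0\}$ with $fg\in H$, then $f,g\in H$. For $S\subseteq D$, $[S]_D$ is the smallest factroid of $D$ containing $S$. A factroid $H$ is regular if $\{y\in D\mid gy\in[gH]_D\}=H$ for every nonzero $g\in D$. For $S\subseteq D$, $G(S)$ is the intersection of all regular factroids of $D$ containing $S$; equivalently $G(S)=\bigcup_{d\in D\setminus\{0\}}\{y\in D\mid dy\in[dS]_D\}$. *)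

theory Defs
  imports "HOL-Computational_Algebra.Fraction_Field"
begin

text \<open>The integral domain D is the type 'a :: idom; its fraction field is 'a fract.
  The element 1/d of the fraction field is Fract 1 d.\<close>

definition is_subring_fract :: "'a::idom fract set \<Rightarrow> bool" where
  "is_subring_fract S \<longleftrightarrow> 0 \<in> S \<and> 1 \<in> S \<and>
     (\<forall>a\<in>S. \<forall>b\<in>S. a + b \<in> S \<and> a - b \<in> S \<and> a * b \<in> S)"

definition recip_compl :: "'a::idom fract set" where
  "recip_compl = \<Inter>{S. is_subring_fract S \<and> (\<forall>d::'a. d \<noteq> 0 \<longrightarrow> Fract 1 d \<in> S)}"

definition prime_ideal_of :: "'a::idom fract set \<Rightarrow> 'a fract set \<Rightarrow> bool" where
  "prime_ideal_of R P \<longleftrightarrow> P \<subseteq> R \<and> 0 \<in> P \<and>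
     (\<forall>a\<in>P. \<forall>b\<in>P. a + b \<in> P \<and> a - b \<in> P) \<and>
     (\<forall>r\<in>R. \<forall>a\<in>P. r * a \<in> P) \<and> 1 \<notin> P \<and>
     (\<forall>a\<in>R. \<forall>b\<in>R. a * b \<in> P \<longrightarrow> a \<in> P \<or> b \<in> P)"

definition p_of :: "'a::idom \<Rightarrow> 'a fract set" where
  "p_of f = (THE P. prime_ideal_of recip_compl P \<and> Fract 1 f \<notin> P \<and>
      (\<forall>Q. prime_ideal_of recip_compl Q \<and> Fract 1 f \<notin> Q \<and> P \<subseteq> Q \<longrightarrow> Q = P))"

definition p_W :: "'a::idom set \<Rightarrow> 'a fract set" where
  "p_W W = (\<Inter>f\<in>W - {0}. p_of f)"

definition factroid :: "'a::idom set \<Rightarrow> bool" where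
  "factroid H \<longleftrightarrow> 0 \<in> H \<and> (\<forall>a\<in>H. \<forall>b\<in>H. a + b \<in> H \<and> a - b \<in> H) \<and>
     (\<forall>f g. f \<noteq> 0 \<and> g \<noteq> 0 \<and> f * g \<in> H \<longrightarrow> f \<in> H \<and> g \<in> H)"

definition factroid_hull :: "'a::idom set \<Rightarrow> 'a set" where
  "factroid_hull S = \<Inter>{H. factroid H \<and> S \<subseteq> H}"

definition regular_factroid :: "'a::idom set \<Rightarrow> bool" where
  "regular_factroid H \<longleftrightarrow> factroid H \<and>
     (\<forall>g. g \<noteq> 0 \<longrightarrow> {y. g * y \<in> factroid_hull ((\<lambda>h. g * h) ` H)} = H)"

definition G_of :: "'a::idom set \<Rightarrow> 'a set" where
  "G_of S = \<Inter>{H. regular_factroid H \<and> S \<subseteq> H}"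

end

theory Submission
  imports Defs
begin


definition subr :: "'k::field set \<Rightarrow> bool" where
  "subr S \<longleftrightarrow> 0 \<in> S \<and> 1 \<in> S \<and> (\<forall>a\<in>S. \<forall>b\<in>S. a + b \<in> S \<and> - a \<in> S \<and> a * b \<in> S)"

inductive_set usum :: "'k::field set \<Rightarrow> 'k set" for E where
  usum_zero: "0 \<in> usum E"
| usum_step: "x \<in> usum E \<Longrightarrow> e \<in> E \<Longrightarrow> e \<noteq> 0 \<Longrightarrow> x + inverse e \<in> usum E"

lemma subr0: "subr S \<Longrightarrow> 0 \<in> S" and subr1: "subr S \<Longrightarrow> 1 \<in> S"
  and subr_add: "subr S \<Longrightarrow> a \<in> S \<Longrightarrow> b \<in> S \<Longrightarrow> a + b \<in> S"
  and subr_neg: "subr S \<Longrightarrow> a \<in> S \<Longrightarrow> - a \<in> S"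
  and subr_mult: "subr S \<Longrightarrow> a \<in> S \<Longrightarrow> b \<in> S \<Longrightarrow> a * b \<in> S"
  unfolding subr_def by auto

lemma subr_diff: "subr S \<Longrightarrow> a \<in> S \<Longrightarrow> b \<in> S \<Longrightarrow> a - b \<in> S"
  by (metis diff_conv_add_uminus subr_add subr_neg)

lemmas subrD = subr0 subr1 subr_add subr_neg subr_mult subr_diff

lemma usum_inv: "e \<in> E \<Longrightarrow> e \<noteq> 0 \<Longrightarrow> inverse e \<in> usum E"
  using usum_step[OF usum_zero] by fastforce

lemma usum_add: assumes "x \<in> usum E" "y \<in> usum E" shows "x + y \<in> usum E"
  using assms(2)
proof (induction y rule: usum.induct)
  case usum_zero then show ?case using assms by simp
next
  case (usum_step y e)
  then have "(x + y) + inverse e \<in> usum E" by (intro usum.usum_step) auto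
  then show ?case by (simp add: add.assoc)
qed

lemma usum_neg:
  assumes "subr E" shows "x \<in> usum E \<Longrightarrow> - x \<in> usum E"
proof (induction x rule: usum.induct)
  case usum_zero then show ?case by (simp add: usum.usum_zero)
next
  case (usum_step x e)
  have "-e \<in> E" using subr_neg[OF assms] usum_step by auto
  then have "- x + inverse (-e) \<in> usum E" using usum_step by (intro usum.usum_step) auto
  then show ?case by simp
qed

lemma usum_mult_inv:
  assumes "subr E" "e \<in> E" "e \<noteq> 0"
  shows "y \<in> usum E \<Longrightarrow> y * inverse e \<in> usum E"
proof (induction y rule: usum.induct)
  case usum_zero then show ?case by (simp add: usum.usum_zero)
next
  case (usum_step y e')
  have "e' * e \<in> E" using subrD[of E] usum_step assms by auto
  then have "y * inverse e + inverse (e' * e) \<in> usum E"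
    using usum_step assms by (intro usum.usum_step) auto
  then show ?case by (simp add: algebra_simps)
qed

lemma usum_mult:
  assumes "subr E" shows "x \<in> usum E \<Longrightarrow> y \<in> usum E \<Longrightarrow> x * y \<in> usum E"
proof (induction x rule: usum.induct)
  case usum_zero then show ?case by (simp add: usum.usum_zero)
next
  case (usum_step x e)
  have "x * y + y * inverse e \<in> usum E"
    using usum_step usum_mult_inv[OF assms] usum_add by blast
  then show ?case by (simp add: algebra_simps)
qed

lemma usum_subr: assumes "subr E" shows "subr (usum E)"
proof -
  have "1 \<in> E" using assms unfolding subr_def by auto
  then have "1 \<in> usum E" using usum_inv[of 1 E] by fastforce
  then show ?thesis unfolding subr_def
    using usum_add usum_neg[OF assms] usum_mult[OF assms] usum.usum_zero by blast
qed

lemma usum_mono: assumes "E \<subseteq> E'" "x \<in> usum E" shows "x \<in> usum E'"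
  using assms(2) by (induction x rule: usum.induct) (use assms(1) in \<open>auto intro: usum.intros\<close>)

definition idl :: "'k::field set \<Rightarrow> 'k set \<Rightarrow> bool" where
  "idl A N \<longleftrightarrow> N \<subseteq> A \<and> 0 \<in> N \<and> (\<forall>a\<in>N. \<forall>b\<in>N. a + b \<in> N) \<and> (\<forall>r\<in>A. \<forall>a\<in>N. r * a \<in> N)"

definition maxl :: "'k::field set \<Rightarrow> 'k set \<Rightarrow> bool" where
  "maxl A N \<longleftrightarrow> idl A N \<and> 1 \<notin> N \<and> (\<forall>J. idl A J \<and> 1 \<notin> J \<and> N \<subseteq> J \<longrightarrow> J = N)"

definition nonunits :: "'k::field set \<Rightarrow> 'k set" where
  "nonunits A = {x \<in> A. x = 0 \<or> inverse x \<notin> A}"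

lemma idl0: "idl A N \<Longrightarrow> 0 \<in> N"
  and idl_add: "idl A N \<Longrightarrow> a \<in> N \<Longrightarrow> b \<in> N \<Longrightarrow> a + b \<in> N"
  and idl_mult: "idl A N \<Longrightarrow> r \<in> A \<Longrightarrow> a \<in> N \<Longrightarrow> r * a \<in> N"
  and idl_mult2: "idl A N \<Longrightarrow> r \<in> A \<Longrightarrow> a \<in> N \<Longrightarrow> a * r \<in> N"
  and idl_sub: "idl A N \<Longrightarrow> a \<in> N \<Longrightarrow> a \<in> A"
  unfolding idl_def by (auto simp: mult.commute)

lemma idl_neg: "idl A N \<Longrightarrow> subr A \<Longrightarrow> a \<in> N \<Longrightarrow> - a \<in> N"
  using idl_mult[of A N "-1" a] subrD(2,4)[of A] by auto

lemma idl_diff: "idl A N \<Longrightarrow> subr A \<Longrightarrow> a \<in> N \<Longrightarrow> b \<in> N \<Longrightarrow> a - b \<in> N"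
  by (metis diff_conv_add_uminus idl_add idl_neg)

lemmas idlD = idl0 idl_add idl_mult idl_mult2 idl_sub idl_neg idl_diff

lemma krull:
  assumes sA: "subr A" and yn: "y \<in> nonunits A"
  shows "\<exists>N. maxl A N \<and> y \<in> N"
proof -
  define \<A> where "\<A> = {J. idl A J \<and> 1 \<notin> J \<and> y \<in> J}"
  have yA: "y \<in> A" using yn unfolding nonunits_def by auto
  define P where "P = {r * y | r. r \<in> A}"
  have "idl A P" unfolding idl_def
  proof (intro conjI ballI)
    show "P \<subseteq> A" using subr_mult[OF sA _ yA] unfolding P_def by auto
    show "0 \<in> P" using subr0[OF sA] unfolding P_def by force
    fix a b assume "a \<in> P" "b \<in> P"
    then obtain r s where "a = r * y" "b = s * y" "r \<in> A" "s \<in> A" unfolding P_def by auto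
    moreover have "r * y + s * y = (r + s) * y" by (simp add: algebra_simps)
    ultimately show "a + b \<in> P" using subr_add[OF sA] unfolding P_def by auto
  next
    fix r a assume "r \<in> A" "a \<in> P"
    then obtain s where "a = s * y" "s \<in> A" unfolding P_def by auto
    moreover have "r * (s * y) = (r * s) * y" by (simp add: algebra_simps)
    ultimately show "r * a \<in> P" using subr_mult[OF sA \<open>r \<in> A\<close>] unfolding P_def by auto
  qed
  moreover have "1 \<notin> P"
  proof
    assume "1 \<in> P"
    then obtain r where "1 = r * y" "r \<in> A" unfolding P_def by auto
    then have yr: "y * r = 1" by (simp add: mult.commute)
    then have "y \<noteq> 0" "inverse y = r" using inverse_unique[OF yr] by auto
    then show False using yn \<open>r \<in> A\<close> unfolding nonunits_def by auto
  qed
  moreover have "y \<in> P" using subr1[OF sA] unfolding P_def by force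
  ultimately have "P \<in> \<A>" unfolding \<A>_def by blast
  then have ne: "\<A> \<noteq> {}" by blast
  have "\<exists>M\<in>\<A>. \<forall>X\<in>\<A>. M \<subseteq> X \<longrightarrow> X = M"
  proof (rule subset_Zorn_nonempty[OF ne])
    fix \<C> assume C: "\<C> \<noteq> {}" "subset.chain \<A> \<C>"
    then have sub: "\<C> \<subseteq> \<A>" and ch: "\<forall>X\<in>\<C>. \<forall>Y\<in>\<C>. X \<subseteq> Y \<or> Y \<subseteq> X"
      by (auto simp: subset_chain_def)
    have "idl A (\<Union>\<C>)" unfolding idl_def
    proof (intro conjI ballI)
      show "\<Union>\<C> \<subseteq> A" using sub unfolding \<A>_def idl_def by auto
      show "0 \<in> \<Union>\<C>" using sub C(1) unfolding \<A>_def idl_def by auto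
      fix a b assume "a \<in> \<Union>\<C>" "b \<in> \<Union>\<C>"
      then obtain X Y where XY: "a \<in> X" "b \<in> Y" "X \<in> \<C>" "Y \<in> \<C>" by auto
      have iX: "idl A X" "idl A Y" using XY sub unfolding \<A>_def by auto
      show "a + b \<in> \<Union>\<C>"
      proof (cases "X \<subseteq> Y")
        case True then show ?thesis using idl_add[OF iX(2)] XY by blast
      next
        case False then have "Y \<subseteq> X" using ch XY by blast
        then show ?thesis using idl_add[OF iX(1)] XY by blast
      qed
    next
      fix r a assume "r \<in> A" "a \<in> \<Union>\<C>"
      then obtain X where "a \<in> X" "X \<in> \<C>" by auto
      then show "r * a \<in> \<Union>\<C>" using sub \<open>r \<in> A\<close> unfolding \<A>_def idl_def by blast
    qed
    moreover have "1 \<notin> \<Union>\<C>" "y \<in> \<Union>\<C>" using sub C(1) unfolding \<A>_def by auto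
    ultimately show "\<Union>\<C> \<in> \<A>" unfolding \<A>_def by blast
  qed
  then obtain M where M: "M \<in> \<A>" "\<forall>X\<in>\<A>. M \<subseteq> X \<longrightarrow> X = M" by blast
  have "maxl A M" unfolding maxl_def
  proof (intro conjI allI impI)
    show "idl A M" "1 \<notin> M" using M unfolding \<A>_def by auto
    fix J assume "idl A J \<and> 1 \<notin> J \<and> M \<subseteq> J"
    then show "J = M" using M unfolding \<A>_def by blast
  qed
  then show ?thesis using M unfolding \<A>_def by blast
qed

lemma max_inv:
  assumes sA: "subr A" and mN: "maxl A N" and aA: "a \<in> A" and aN: "a \<notin> N"
  shows "\<exists>r\<in>A. r * a - 1 \<in> N"
proof -
  have iN: "idl A N" using mN unfolding maxl_def by auto
  define J where "J = {n + r * a | n r. n \<in> N \<and> r \<in> A}"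
  have "idl A J" unfolding idl_def
  proof (intro conjI ballI)
    show "J \<subseteq> A" unfolding J_def
      using subr_add[OF sA idl_sub[OF iN] subr_mult[OF sA _ aA]] by auto
    have "0 = 0 + 0 * a" by simp
    then show "0 \<in> J" unfolding J_def using subr0[OF sA] idl0[OF iN] by blast
    fix x y assume "x \<in> J" "y \<in> J"
    then obtain n r m s where "x = n + r * a" "y = m + s * a" "n \<in> N" "m \<in> N" "r \<in> A" "s \<in> A"
      unfolding J_def by auto
    moreover have "(n + r * a) + (m + s * a) = (n + m) + (r + s) * a" by (simp add: algebra_simps)
    ultimately show "x + y \<in> J" unfolding J_def using subr_add[OF sA] idl_add[OF iN] by blast
  next
    fix t x assume "t \<in> A" "x \<in> J"
    then obtain n r where "x = n + r * a" "n \<in> N" "r \<in> A" unfolding J_def by auto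
    moreover have "t * (n + r * a) = t * n + (t * r) * a" by (simp add: algebra_simps)
    ultimately show "t * x \<in> J" unfolding J_def using subr_mult[OF sA] idl_mult[OF iN] \<open>t \<in> A\<close> by blast
  qed
  moreover have "N \<subseteq> J"
  proof
    fix n assume "n \<in> N"
    have "n = n + 0 * a" by simp
    then show "n \<in> J" unfolding J_def using \<open>n \<in> N\<close> subr0[OF sA] by blast
  qed
  moreover have "a \<in> J"
  proof -
    have "a = 0 + 1 * a" by simp
    then show ?thesis unfolding J_def using idl0[OF iN] subr1[OF sA] by blast
  qed
  ultimately have "1 \<in> J" using mN aN unfolding maxl_def by blast
  then obtain n r where "1 = n + r * a" "n \<in> N" "r \<in> A" unfolding J_def by auto
  then have eq: "r * a - 1 = - n" by (simp add: algebra_simps)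
  have "r * a - 1 \<in> N" unfolding eq using idl_neg[OF iN sA \<open>n \<in> N\<close>] .
  then show ?thesis using \<open>r \<in> A\<close> by blast
qed

lemma max_prime:
  assumes sA: "subr A" and mN: "maxl A N" and "a \<in> A" "b \<in> A" "a * b \<in> N"
  shows "a \<in> N \<or> b \<in> N"
proof (rule ccontr)
  assume nn: "\<not> (a \<in> N \<or> b \<in> N)"
  then obtain r where r: "r \<in> A" "r * a - 1 \<in> N" using max_inv assms by blast
  have iN: "idl A N" using mN unfolding maxl_def by auto
  have "b = r * (a * b) - b * (r * a - 1)" by (simp add: algebra_simps)
  moreover have "r * (a * b) - b * (r * a - 1) \<in> N"
    using idl_diff[OF iN sA idl_mult[OF iN r(1) assms(5)] idl_mult[OF iN assms(4) r(2)]] .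
  ultimately show False using nn by auto
qed



lemma split_lemma:
  assumes sE: "subr E" and T0: "0 \<in> T" and T1: "1 \<in> T"
    and Tadd: "\<And>a b. a \<in> T \<Longrightarrow> b \<in> T \<Longrightarrow> a + b \<in> T"
    and Tmult: "\<And>a b. a \<in> T \<Longrightarrow> b \<in> T \<Longrightarrow> a * b \<in> T"
    and iN: "idl (usum E) N"
    and out: "\<And>e. e \<in> E \<Longrightarrow> e \<noteq> 0 \<Longrightarrow> e \<notin> T \<Longrightarrow> inverse e \<in> N"
    and r: "r \<in> usum E"
  shows "\<exists>a s c n. a \<in> usum E \<and> s \<in> T \<and> c \<in> T \<and> c \<noteq> 0 \<and> a = s / c \<and> n \<in> N \<and> r = a + n"
  using r
proof (induction r rule: usum.induct)
  case usum_zero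
  show ?case using usum.usum_zero T0 T1 idl0[OF iN] by (intro exI[of _ 0] exI[of _ 1]) auto
next
  case (usum_step x e)
  then obtain a s c n where h: "a \<in> usum E" "s \<in> T" "c \<in> T" "c \<noteq> 0" "a = s / c" "n \<in> N" "x = a + n"
    by blast
  show ?case
  proof (cases "e \<in> T")
    case True
    have "a + inverse e \<in> usum E" using h usum_step by (intro usum.usum_step)
    moreover have "s * e + c \<in> T" "c * e \<in> T" using h True Tadd Tmult by auto
    moreover have "c * e \<noteq> 0" using h usum_step by auto
    moreover have "a + inverse e = (s * e + c) / (c * e)" using h usum_step
      by (simp add: field_simps)
    moreover have "x + inverse e = (a + inverse e) + n" using h by (simp add: algebra_simps)
    ultimately show ?thesis using h by blast
  next
    case False
    then have "inverse e \<in> N" using out usum_step by auto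
    then have "n + inverse e \<in> N" using idl_add[OF iN h(6)] by auto
    moreover have "x + inverse e = a + (n + inverse e)" using h by (simp add: algebra_simps)
    ultimately show ?thesis using h by blast
  qed
qed

lemma key_lemma:
  assumes sE: "subr E" and mN: "maxl (usum E) N" and eE: "e \<in> E" and e0: "e \<noteq> 0"
    and eN: "inverse e \<notin> N"
  shows "e \<in> usum E"
proof -
  let ?A = "usum E"
  have sA: "subr ?A" using usum_subr[OF sE] .
  have iN: "idl ?A N" using mN unfolding maxl_def by auto
  have one: "1 \<notin> N" using mN unfolding maxl_def by auto
  define T where "T = {t \<in> E. t = 0 \<or> inverse t \<notin> N}"
  have T0: "0 \<in> T" unfolding T_def using subr0[OF sE] by auto
  have T1: "1 \<in> T" unfolding T_def using subr1[OF sE] one by auto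
  have Tmult: "a * b \<in> T" if "a \<in> T" "b \<in> T" for a b
  proof -
    have "a * b \<in> E" using that subr_mult[OF sE] unfolding T_def by auto
    moreover have "inverse (a * b) \<notin> N" if "a \<noteq> 0" "b \<noteq> 0"
    proof
      assume "inverse (a * b) \<in> N"
      then have "inverse a * inverse b \<in> N" by (simp add: inverse_mult_distrib)
      moreover have "inverse a \<in> ?A" "inverse b \<in> ?A"
        using \<open>a \<in> T\<close> \<open>b \<in> T\<close> that usum_inv unfolding T_def by auto
      ultimately have "inverse a \<in> N \<or> inverse b \<in> N" using max_prime[OF sA mN] by blast
      then show False using \<open>a \<in> T\<close> \<open>b \<in> T\<close> that unfolding T_def by auto
    qed
    ultimately show ?thesis unfolding T_def by auto
  qed
  have Tneg: "- a \<in> T" if "a \<in> T" for a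
  proof -
    have "- a \<in> E" using that subr_neg[OF sE] unfolding T_def by auto
    moreover have "inverse (- a) \<notin> N" if "a \<noteq> 0"
    proof
      assume "inverse (- a) \<in> N"
      then have "- (inverse (- a)) \<in> N" using idl_neg[OF iN sA] by blast
      then have "inverse a \<in> N" by simp
      then show False using \<open>a \<in> T\<close> that unfolding T_def by auto
    qed
    ultimately show ?thesis unfolding T_def by auto
  qed
  have Tadd: "a + b \<in> T" if "a \<in> T" "b \<in> T" for a b
  proof (cases "a = 0 \<or> b = 0 \<or> a + b = 0")
    case True
    then show ?thesis using that subr_add[OF sE] T0 unfolding T_def by auto
  next
    case False
    have abE: "a + b \<in> E" using that subr_add[OF sE] unfolding T_def by auto
    have "inverse (a + b) \<notin> N"
    proof
      assume h: "inverse (a + b) \<in> N"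
      have "a \<in> E" "b \<in> E" using that unfolding T_def by auto
      then have "inverse a + inverse b \<in> ?A"
        using usum_inv[of a E] usum_inv[of b E] subr_add[OF sA] False by auto
      then have "inverse (a + b) * (inverse a + inverse b) \<in> N"
        using idl_mult2[OF iN _ h] by blast
      moreover have "inverse (a + b) * (inverse a + inverse b) = inverse (a * b)"
        using False by (simp add: field_simps)
      ultimately have "inverse (a * b) \<in> N" by simp
      moreover have "a * b \<in> T" using Tmult that by blast
      ultimately show False using False unfolding T_def by auto
    qed
    then show ?thesis using abE unfolding T_def by auto
  qed
  have out: "inverse t \<in> N" if "t \<in> E" "t \<noteq> 0" "t \<notin> T" for t
    using that unfolding T_def by auto
  have eT: "e \<in> T" using eE eN unfolding T_def by auto
  have ieA: "inverse e \<in> ?A" using usum_inv[OF eE e0] .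
  obtain r where r: "r \<in> ?A" "r * inverse e - 1 \<in> N" using max_inv[OF sA mN ieA eN] by blast
  obtain a s c n where h: "a \<in> ?A" "s \<in> T" "c \<in> T" "c \<noteq> 0" "a = s / c" "n \<in> N" "r = a + n"
    using split_lemma[OF sE T0 T1 Tadd Tmult iN out r(1)] by blast
  have eq1: "a * inverse e - 1 = (r * inverse e - 1) - n * inverse e" using h by (simp add: algebra_simps)
  have aN: "a * inverse e - 1 \<in> N"
    unfolding eq1 using idl_diff[OF iN sA r(2) idl_mult2[OF iN ieA h(6)]] .
  have ceT: "c * e \<in> T" using Tmult h eT by blast
  have ce0: "c * e \<noteq> 0" using h e0 by simp
  show ?thesis
  proof (cases "s - c * e = 0")
    case True
    then have "a = e" using h by (simp add: field_simps)
    then show ?thesis using h by simp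
  next
    case False
    define w where "w = s - c * e"
    have wT: "w \<in> T" unfolding w_def using Tadd[OF h(2) Tneg[OF ceT]] by simp
    then have wE: "w \<in> E" unfolding T_def by auto
    have iwA: "inverse w \<in> ?A" using usum_inv[OF wE] False w_def by auto
    have "a * inverse e - 1 = w * inverse (c * e)" unfolding w_def using h e0
      by (simp add: field_simps)
    then have "inverse w * (w * inverse (c * e)) \<in> N" using idl_mult[OF iN iwA] aN by simp
    then have "inverse (c * e) \<in> N" using False w_def by (simp add: field_simps)
    then show ?thesis using ceT ce0 unfolding T_def by auto
  qed
qed



lemma nonunit_in_max:
  assumes sE: "subr E" and xn: "x \<in> nonunits (usum E)"
  shows "\<forall>N. maxl (usum E) N \<longrightarrow> x \<in> N"
proof (cases "x = 0")
  case True
  then show ?thesis unfolding maxl_def using idl0 by blast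
next
  case x0: False
  let ?A = "usum E"
  have sA: "subr ?A" using usum_subr[OF sE] .
  have xA: "x \<in> ?A" and xinv: "inverse x \<notin> ?A" using xn x0 unfolding nonunits_def by auto
  define J where "J = {z \<in> ?A. \<forall>N. maxl ?A N \<longrightarrow> z \<in> N}"
  have iJ: "idl ?A J" unfolding idl_def J_def
  proof (intro conjI ballI allI impI)
    show "{z \<in> ?A. \<forall>N. maxl ?A N \<longrightarrow> z \<in> N} \<subseteq> ?A" by auto
    show "0 \<in> {z \<in> ?A. \<forall>N. maxl ?A N \<longrightarrow> z \<in> N}" using subr0[OF sA] idl0 unfolding maxl_def by blast
    fix a b assume "a \<in> {z \<in> ?A. \<forall>N. maxl ?A N \<longrightarrow> z \<in> N}" "b \<in> {z \<in> ?A. \<forall>N. maxl ?A N \<longrightarrow> z \<in> N}"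
    then show "a + b \<in> {z \<in> ?A. \<forall>N. maxl ?A N \<longrightarrow> z \<in> N}"
      using subr_add[OF sA] idl_add unfolding maxl_def by blast
  next
    fix r a assume "r \<in> ?A" "a \<in> {z \<in> ?A. \<forall>N. maxl ?A N \<longrightarrow> z \<in> N}"
    then show "r * a \<in> {z \<in> ?A. \<forall>N. maxl ?A N \<longrightarrow> z \<in> N}"
      using subr_mult[OF sA] idl_mult unfolding maxl_def by blast
  qed
  define T where "T = E \<inter> ?A"
  have T0: "0 \<in> T" unfolding T_def using subr0[OF sE] subr0[OF sA] by auto
  have T1: "1 \<in> T" unfolding T_def using subr1[OF sE] subr1[OF sA] by auto
  have Tadd: "a + b \<in> T" if "a \<in> T" "b \<in> T" for a b
    using that subr_add[OF sE] subr_add[OF sA] unfolding T_def by auto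
  have Tmult: "a * b \<in> T" if "a \<in> T" "b \<in> T" for a b
    using that subr_mult[OF sE] subr_mult[OF sA] unfolding T_def by auto
  have out: "inverse e \<in> J" if "e \<in> E" "e \<noteq> 0" "e \<notin> T" for e
  proof -
    have "inverse e \<in> ?A" using usum_inv that by blast
    moreover have "inverse e \<in> N" if "maxl ?A N" for N
      using key_lemma[OF sE that \<open>e \<in> E\<close> \<open>e \<noteq> 0\<close>] \<open>e \<notin> T\<close> \<open>e \<in> E\<close> unfolding T_def by blast
    ultimately show ?thesis unfolding J_def by blast
  qed
  obtain a s c n where h: "a \<in> ?A" "s \<in> T" "c \<in> T" "c \<noteq> 0" "a = s / c" "n \<in> J" "x = a + n"
    using split_lemma[OF sE T0 T1 Tadd Tmult iJ out xA] by blast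
  show ?thesis
  proof (cases "s = 0")
    case True
    then have "x = n" using h by simp
    then show ?thesis using h(6) unfolding J_def by blast
  next
    case False
    have sE': "s \<in> E" and cA: "c \<in> ?A" using h unfolding T_def by auto
    have a0: "a \<noteq> 0" using h False by simp
    have iaA: "inverse a \<in> ?A"
    proof -
      have "inverse a = c / s" unfolding h(5) by simp
      then have "inverse a = c * inverse s" by (simp add: divide_inverse)
      then show ?thesis using subr_mult[OF sA cA usum_inv[OF sE' False]] by simp
    qed
    define y where "y = x * inverse a"
    have yA: "y \<in> ?A" unfolding y_def using subr_mult[OF sA xA iaA] .
    have y0: "y \<noteq> 0" unfolding y_def using x0 a0 by simp
    have "inverse y \<notin> ?A"
    proof
      assume "inverse y \<in> ?A"
      then have "inverse a * inverse y \<in> ?A" using subr_mult[OF sA iaA] by blast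
      moreover have "inverse a * inverse y = inverse x" unfolding y_def using a0 x0
        by (simp add: field_simps)
      ultimately show False using xinv by simp
    qed
    then have "y \<in> nonunits ?A" using yA unfolding nonunits_def by auto
    then obtain N where N: "maxl ?A N" "y \<in> N" using krull[OF sA] by blast
    have iN: "idl ?A N" using N unfolding maxl_def by auto
    have "n * inverse a \<in> J" using idl_mult2[OF iJ iaA h(6)] .
    then have nN: "n * inverse a \<in> N" using N unfolding J_def by blast
    have "y - n * inverse a = 1" unfolding y_def using h a0 by (simp add: field_simps)
    moreover have "y - n * inverse a \<in> N" using idl_diff[OF iN sA N(2) nN] .
    ultimately show ?thesis using N unfolding maxl_def by simp
  qed
qed

lemma nonunits_add:
  assumes sE: "subr E" and x: "x \<in> nonunits (usum E)" and y: "y \<in> nonunits (usum E)"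
  shows "x + y \<in> nonunits (usum E)"
proof (rule ccontr)
  let ?A = "usum E"
  have sA: "subr ?A" using usum_subr[OF sE] .
  assume nn: "x + y \<notin> nonunits ?A"
  have xyA: "x + y \<in> ?A" using x y subr_add[OF sA] unfolding nonunits_def by auto
  then have u: "x + y \<noteq> 0" "inverse (x + y) \<in> ?A" using nn unfolding nonunits_def by auto
  have "0 \<in> nonunits ?A" using subr0[OF sA] unfolding nonunits_def by auto
  then obtain N where N: "maxl ?A N" using krull[OF sA] by blast
  have iN: "idl ?A N" using N unfolding maxl_def by auto
  have "x \<in> N" "y \<in> N" using nonunit_in_max[OF sE] x y N by blast+
  then have "x + y \<in> N" using idl_add[OF iN] by blast
  then have "inverse (x + y) * (x + y) \<in> N" using idl_mult[OF iN u(2)] by blast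
  then have "1 \<in> N" using u(1) by simp
  then show False using N unfolding maxl_def by simp
qed

lemma nonunits_mult:
  assumes sE: "subr E" and r: "r \<in> usum E" and x: "x \<in> nonunits (usum E)"
  shows "r * x \<in> nonunits (usum E)"
proof -
  let ?A = "usum E"
  have sA: "subr ?A" using usum_subr[OF sE] .
  have "r * x \<in> ?A" using subr_mult[OF sA r] x unfolding nonunits_def by auto
  moreover have "inverse (r * x) \<notin> ?A" if "r * x \<noteq> 0"
  proof
    assume "inverse (r * x) \<in> ?A"
    then have i1: "r * inverse (r * x) \<in> ?A" using subr_mult[OF sA r] by blast
    have eq: "r * inverse (r * x) = inverse x" using that by (simp add: field_simps)
    have "inverse x \<in> ?A" using i1 unfolding eq .
    then show False using x that unfolding nonunits_def by auto
  qed
  ultimately show ?thesis unfolding nonunits_def by auto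
qed



definition emb :: "'a::idom \<Rightarrow> 'a fract" where "emb d = Fract d 1"

lemma emb_add: "emb (a + b) = emb a + emb b" and emb_mult: "emb (a * b) = emb a * emb b"
  and emb_neg: "emb (- a) = - emb a" and emb_0: "emb 0 = 0" and emb_1: "emb 1 = 1"
  unfolding emb_def by (simp_all add: Zero_fract_def One_fract_def)

lemma emb_pow: "emb (a ^ n) = emb a ^ n"
  by (induction n) (simp_all add: emb_1 emb_mult)

lemma emb_inj: "emb a = emb b \<longleftrightarrow> a = b"
  unfolding emb_def by (simp add: eq_fract)

lemma emb_eq0: "emb a = 0 \<longleftrightarrow> a = 0"
  by (metis emb_inj emb_0)

lemma Fract1: "Fract 1 d = inverse (emb d)"
  unfolding emb_def by simp

definition RR :: "'a::idom fract set" where "RR = usum (range emb)"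

lemma subr_ED: "subr (range (emb :: 'a::idom \<Rightarrow> _))"
  unfolding subr_def
proof (intro conjI ballI)
  show "0 \<in> range emb" using emb_0 by (metis rangeI)
  show "1 \<in> range emb" using emb_1 by (metis rangeI)
  fix a b :: "'a fract" assume "a \<in> range emb" "b \<in> range emb"
  then obtain u v where "a = emb u" "b = emb v" by auto
  then show "a + b \<in> range emb" "- a \<in> range emb" "a * b \<in> range emb"
    by (metis emb_add rangeI, metis emb_neg rangeI, metis emb_mult rangeI)
qed

lemma subr_RR: "subr RR" unfolding RR_def using usum_subr[OF subr_ED] .

lemma in_recipI:
  fixes x :: "'a::idom fract"
  assumes "\<And>S. is_subring_fract S \<Longrightarrow> (\<forall>d::'a. d \<noteq> 0 \<longrightarrow> Fract 1 d \<in> S) \<Longrightarrow> x \<in> S"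
  shows "x \<in> recip_compl"
  unfolding recip_compl_def using assms by (simp add: Inter_iff)

lemma in_recipD:
  fixes x :: "'a::idom fract"
  assumes "x \<in> recip_compl" "is_subring_fract S" "\<forall>d::'a. d \<noteq> 0 \<longrightarrow> Fract 1 d \<in> S"
  shows "x \<in> S"
  using assms unfolding recip_compl_def by (simp add: Inter_iff)

lemma is_subring_fractD:
  assumes "is_subring_fract S"
  shows "0 \<in> S" "a \<in> S \<Longrightarrow> b \<in> S \<Longrightarrow> a + b \<in> S"
  using assms unfolding is_subring_fract_def by auto

lemma is_subring_RR: "is_subring_fract (RR :: 'a::idom fract set)"
proof -
  have s: "subr (RR :: 'a fract set)" by (rule subr_RR)
  show ?thesis unfolding is_subring_fract_def
    using subr0[OF s] subr1[OF s] subr_add[OF s] subr_mult[OF s] subr_diff[OF s] by simp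
qed

lemma Fract_RR: "\<forall>d::'a::idom. d \<noteq> 0 \<longrightarrow> Fract 1 d \<in> RR"
proof (intro allI impI)
  fix d :: 'a assume "d \<noteq> 0"
  then have "emb d \<noteq> 0" using emb_eq0 by auto
  then show "Fract 1 d \<in> RR" unfolding RR_def Fract1 by (intro usum_inv) auto
qed

lemma recip_sub_RR: "(recip_compl :: 'a::idom fract set) \<subseteq> RR"
proof
  fix x :: "'a fract" assume "x \<in> recip_compl"
  then show "x \<in> RR" by (rule in_recipD[OF _ is_subring_RR Fract_RR])
qed

lemma usum_recip: "x \<in> usum (range emb) \<Longrightarrow> x \<in> recip_compl"
proof (induction x rule: usum.induct)
  case usum_zero then show ?case using is_subring_fractD(1) by (intro in_recipI)
next
  case (usum_step x e)
  then obtain d where d: "e = emb d" by blast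
  then have "d \<noteq> 0" using usum_step(3) emb_0 by auto
  have ie: "inverse e = Fract 1 d" using d by (simp add: Fract1)
  have "x + Fract 1 d \<in> recip_compl"
  proof (rule in_recipI)
    fix S assume S: "is_subring_fract S" "\<forall>d::'a. d \<noteq> 0 \<longrightarrow> Fract 1 d \<in> S"
    have "x \<in> S" using in_recipD[OF usum_step(4) S] .
    moreover have "Fract 1 d \<in> S" using S(2) \<open>d \<noteq> 0\<close> by blast
    ultimately show "x + Fract 1 d \<in> S" using is_subring_fractD(2)[OF S(1)] by blast
  qed
  then show ?case unfolding ie .
qed

lemma recip_compl_RR: "(recip_compl :: 'a::idom fract set) = RR"
proof (rule equalityI[OF recip_sub_RR])
  show "(RR :: 'a fract set) \<subseteq> recip_compl"
  proof
    fix x :: "'a fract" assume "x \<in> RR"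
    then show "x \<in> recip_compl" unfolding RR_def by (rule usum_recip)
  qed
qed

lemma subr_pow: assumes "subr S" "a \<in> S" shows "a ^ n \<in> S"
proof (induction n)
  case 0 then show ?case using subr1[OF assms(1)] by simp
next
  case (Suc n) then show ?case using subr_mult[OF assms(1) assms(2) Suc.IH] by simp
qed

lemma inv_emb_RR: "inverse (emb d) \<in> RR"
proof (cases "d = 0")
  case True then show ?thesis using subr0[OF subr_RR] by (simp add: emb_0)
next
  case False then have "emb d \<noteq> 0" using emb_eq0 by auto
  then show ?thesis unfolding RR_def by (intro usum_inv) auto
qed

definition Ef :: "'a::idom \<Rightarrow> 'a fract set" where
  "Ef f = {x. \<exists>k. x * emb f ^ k \<in> range emb}"

lemma subr_Ef: "subr (Ef f)"
  unfolding subr_def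
proof (intro conjI ballI)
  have "0 * emb f ^ 0 = emb 0" by (simp add: emb_0)
  then show "0 \<in> Ef f" unfolding Ef_def by blast
  have "1 * emb f ^ 0 = emb 1" by (simp add: emb_1)
  then show "1 \<in> Ef f" unfolding Ef_def by blast
  fix a b assume "a \<in> Ef f" "b \<in> Ef f"
  then obtain k l u v where kl: "a * emb f ^ k = emb u" "b * emb f ^ l = emb v"
    unfolding Ef_def by auto
  have "(a + b) * emb f ^ (k + l) = (a * emb f ^ k) * emb f ^ l + (b * emb f ^ l) * emb f ^ k"
    by (simp add: power_add algebra_simps)
  also have "\<dots> = emb (u * f ^ l + v * f ^ k)" using kl by (simp add: emb_add emb_mult emb_pow)
  finally have "(a + b) * emb f ^ (k + l) = emb (u * f ^ l + v * f ^ k)" .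
  then show "a + b \<in> Ef f" unfolding Ef_def by blast
  have "(- a) * emb f ^ k = emb (- u)" using kl by (simp add: emb_neg)
  then show "- a \<in> Ef f" unfolding Ef_def by blast
  have "(a * b) * emb f ^ (k + l) = (a * emb f ^ k) * (b * emb f ^ l)"
    by (simp add: power_add algebra_simps)
  also have "\<dots> = emb (u * v)" using kl by (simp add: emb_mult)
  finally have "(a * b) * emb f ^ (k + l) = emb (u * v)" .
  then show "a * b \<in> Ef f" unfolding Ef_def by blast
qed

lemma ED_Ef: "range emb \<subseteq> Ef f"
proof
  fix x :: "'a fract" assume "x \<in> range emb"
  then have "x * emb f ^ 0 \<in> range emb" by simp
  then show "x \<in> Ef f" unfolding Ef_def by blast
qed

lemma RR_Af: "RR \<subseteq> usum (Ef f)"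
  unfolding RR_def using usum_mono[OF ED_Ef] by blast

lemma emb_f_Af: assumes "f \<noteq> 0" shows "emb f \<in> usum (Ef f)"
proof -
  have "inverse (emb f) * emb f ^ 1 = emb 1" using assms by (simp add: emb_eq0 emb_1)
  then have "inverse (emb f) \<in> Ef f" unfolding Ef_def by blast
  moreover have "inverse (emb f) \<noteq> 0" using assms emb_eq0 by auto
  ultimately have "inverse (inverse (emb f)) \<in> usum (Ef f)" by (rule usum_inv)
  then show ?thesis by simp
qed

lemma Af_repr:
  assumes f0: "f \<noteq> 0" and y: "y \<in> usum (Ef f)"
  shows "\<exists>K r. r \<in> RR \<and> y = r * emb f ^ K"
  using y
proof (induction y rule: usum.induct)
  case usum_zero then show ?case using subr0[OF subr_RR] by auto
next
  case (usum_step y e)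
  then obtain K r where h: "r \<in> RR" "y = r * emb f ^ K" by blast
  obtain k d where kd: "e * emb f ^ k = emb d" using \<open>e \<in> Ef f\<close> unfolding Ef_def by auto
  have ef0: "emb f \<noteq> 0" using f0 emb_eq0 by auto
  have efk: "emb f ^ k \<noteq> 0" using ef0 by simp
  have ed0: "emb d \<noteq> 0"
  proof
    assume "emb d = 0"
    then have "e * emb f ^ k = 0" using kd by simp
    then show False using \<open>e \<noteq> 0\<close> efk by simp
  qed
  have "e = emb d / emb f ^ k" using kd efk by (simp add: eq_divide_eq)
  then have ie: "inverse e = emb f ^ k * inverse (emb d)" by (simp add: divide_inverse mult.commute)
  define r' where "r' = r * inverse (emb f) ^ k + inverse (emb d) * inverse (emb f) ^ K"
  have i1: "inverse (emb f) ^ k \<in> RR" by (rule subr_pow[OF subr_RR inv_emb_RR])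
  have i2: "inverse (emb f) ^ K \<in> RR" by (rule subr_pow[OF subr_RR inv_emb_RR])
  have "r' \<in> RR" unfolding r'_def
    using subr_add[OF subr_RR subr_mult[OF subr_RR h(1) i1] subr_mult[OF subr_RR inv_emb_RR i2]] .
  moreover have "y + inverse e = r' * emb f ^ (K + k)"
  proof -
    have c1: "inverse (emb f) ^ k * emb f ^ k = 1" "inverse (emb f) ^ K * emb f ^ K = 1"
      using ef0 by (simp_all add: power_mult_distrib[symmetric])
    have "r' * emb f ^ (K + k) = r * emb f ^ K * (inverse (emb f) ^ k * emb f ^ k)
        + emb f ^ k * inverse (emb d) * (inverse (emb f) ^ K * emb f ^ K)"
      unfolding r'_def power_add distrib_right by (simp only: mult_ac)
    also have "\<dots> = y + inverse e" unfolding c1 h(2) ie by simp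
    finally show ?thesis by simp
  qed
  ultimately show ?case by blast
qed



definition pf :: "'a::idom \<Rightarrow> 'a fract set" where
  "pf f = nonunits (usum (Ef f)) \<inter> RR"

lemma pf_prime: "prime_ideal_of recip_compl (pf (f :: 'a::idom))"
proof -
  let ?A = "usum (Ef f)"
  have sE: "subr (Ef f)" by (rule subr_Ef)
  have sA: "subr ?A" by (rule usum_subr[OF sE])
  have sR: "subr (RR :: 'a fract set)" by (rule subr_RR)
  have RA: "(RR :: 'a fract set) \<subseteq> ?A" by (rule RR_Af)
  have m1: "-1 \<in> ?A" using subr_neg[OF sA subr1[OF sA]] .
  show ?thesis unfolding prime_ideal_of_def recip_compl_RR
  proof (intro conjI ballI impI)
    show "pf f \<subseteq> RR" unfolding pf_def by auto
    show "0 \<in> pf f" unfolding pf_def nonunits_def using subr0[OF sA] subr0[OF sR] by auto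
    fix a b :: "'a fract" assume a: "a \<in> pf f" and b: "b \<in> pf f"
    then show "a + b \<in> pf f" unfolding pf_def
      using nonunits_add[OF sE] subr_add[OF sR] by auto
    have "(-1) * b \<in> nonunits ?A" using nonunits_mult[OF sE m1] b unfolding pf_def by auto
    moreover have "a \<in> nonunits ?A" using a unfolding pf_def by auto
    ultimately have "a + (-1) * b \<in> nonunits ?A" using nonunits_add[OF sE] by blast
    then show "a - b \<in> pf f" using a b subr_diff[OF sR] unfolding pf_def by auto
  next
    fix r a :: "'a fract" assume r: "r \<in> RR" and a: "a \<in> pf f"
    then show "r * a \<in> pf f" unfolding pf_def
      using nonunits_mult[OF sE] subr_mult[OF sR] RA by auto
  next
    show "1 \<notin> pf f" unfolding pf_def nonunits_def using subr1[OF sA] by auto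
  next
    fix a b :: "'a fract" assume a: "a \<in> RR" and b: "b \<in> RR" and ab: "a * b \<in> pf f"
    show "a \<in> pf f \<or> b \<in> pf f"
    proof (rule ccontr)
      assume "\<not> (a \<in> pf f \<or> b \<in> pf f)"
      then have u: "a \<noteq> 0" "inverse a \<in> ?A" "b \<noteq> 0" "inverse b \<in> ?A"
        using a b RA unfolding pf_def nonunits_def by auto
      then have "inverse (a * b) \<in> ?A" using subr_mult[OF sA] by (simp add: inverse_mult_distrib)
      then show False using ab u unfolding pf_def nonunits_def by auto
    qed
  qed
qed

lemma pf_avoid: assumes "(f :: 'a::idom) \<noteq> 0" shows "Fract 1 f \<notin> pf f"
proof
  assume "Fract 1 f \<in> pf f"
  then have "inverse (emb f) \<in> nonunits (usum (Ef f))" unfolding pf_def Fract1 by auto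
  moreover have "emb f \<noteq> 0" using assms emb_eq0 by auto
  ultimately show False using emb_f_Af[OF assms] unfolding nonunits_def by auto
qed

lemma pow_in_prime:
  assumes P: "prime_ideal_of recip_compl Q" and x: "x \<in> recip_compl" and xK: "x ^ K \<in> Q"
  shows "x \<in> Q"
  using xK
proof (induction K)
  case 0 then show ?case using P unfolding prime_ideal_of_def by simp
next
  case (Suc K)
  have s: "is_subring_fract (recip_compl :: 'a fract set)"
    unfolding recip_compl_RR by (rule is_subring_RR)
  have "x ^ K \<in> recip_compl"
  proof (induction K)
    case 0 then show ?case using s unfolding is_subring_fract_def by simp
  next
    case (Suc K) then show ?case using s x unfolding is_subring_fract_def by simp
  qed
  then have "x \<in> Q \<or> x ^ K \<in> Q" using P x Suc.prems unfolding prime_ideal_of_def by simp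
  then show ?case using Suc.IH by blast
qed

lemma pf_max:
  assumes f0: "(f :: 'a::idom) \<noteq> 0" and P: "prime_ideal_of recip_compl Q" and nf: "Fract 1 f \<notin> Q"
  shows "Q \<subseteq> pf f"
proof
  fix q assume q: "q \<in> Q"
  have qR: "q \<in> RR" using P q unfolding prime_ideal_of_def recip_compl_RR by auto
  show "q \<in> pf f"
  proof (rule ccontr)
    assume "q \<notin> pf f"
    then have q0: "q \<noteq> 0" and iq: "inverse q \<in> usum (Ef f)"
      using qR RR_Af[of f] unfolding pf_def nonunits_def by auto
    obtain K r where r: "r \<in> RR" "inverse q = r * emb f ^ K" using Af_repr[OF f0 iq] by blast
    have ef0: "emb f \<noteq> 0" using f0 emb_eq0 by auto
    have "r * q = inverse (emb f) ^ K"
    proof -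
      have "q * (r * emb f ^ K) = 1" using r(2) q0 by (metis right_inverse)
      then have "(r * q) * emb f ^ K = 1" by (simp add: algebra_simps)
      then show ?thesis using ef0 by (simp add: field_simps power_inverse)
    qed
    moreover have "r * q \<in> Q" using P r(1) q unfolding prime_ideal_of_def recip_compl_RR by blast
    ultimately have "Fract 1 f ^ K \<in> Q" by (simp add: Fract1)
    moreover have "Fract 1 f \<in> recip_compl" using Fract_RR f0 unfolding recip_compl_RR by blast
    ultimately show False using pow_in_prime[OF P] nf by blast
  qed
qed

lemma p_of_eq: assumes f0: "(f :: 'a::idom) \<noteq> 0" shows "p_of f = pf f"
  unfolding p_of_def
proof (rule the_equality)
  show "prime_ideal_of recip_compl (pf f) \<and> Fract 1 f \<notin> pf f \<and>
      (\<forall>Q. prime_ideal_of recip_compl Q \<and> Fract 1 f \<notin> Q \<and> pf f \<subseteq> Q \<longrightarrow> Q = pf f)"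
    using pf_prime pf_avoid[OF f0] pf_max[OF f0] by blast
next
  fix P assume P: "prime_ideal_of recip_compl P \<and> Fract 1 f \<notin> P \<and>
      (\<forall>Q. prime_ideal_of recip_compl Q \<and> Fract 1 f \<notin> Q \<and> P \<subseteq> Q \<longrightarrow> Q = P)"
  then have "P \<subseteq> pf f" using pf_max[OF f0] by blast
  then show "P = pf f" using P pf_prime[of f] pf_avoid[OF f0] by blast
qed



lemma fld_add: fixes r1 r2 F1 F2 C :: "'a::field"
  assumes "F1 \<noteq> 0" "F2 \<noteq> 0"
  shows "C * (r1 * inverse F2 + r2 * inverse F1) * (F1 * F2) = C * r1 * F1 + C * r2 * F2"
proof -
  have "C * (r1 * inverse F2 + r2 * inverse F1) * (F1 * F2) = C * r1 * F1 * (inverse F2 * F2) + C * r2 * F2 * (inverse F1 * F1)"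
    by (simp add: distrib_left distrib_right mult_ac)
  also have "\<dots> = C * r1 * F1 + C * r2 * F2" using assms by simp
  finally show ?thesis .
qed

lemma fld_diff: fixes r1 r2 F1 F2 C :: "'a::field"
  assumes "F1 \<noteq> 0" "F2 \<noteq> 0"
  shows "C * (r1 * inverse F2 - r2 * inverse F1) * (F1 * F2) = C * r1 * F1 - C * r2 * F2"
proof -
  have "C * (r1 * inverse F2 - r2 * inverse F1) * (F1 * F2) = C * r1 * F1 * (inverse F2 * F2) - C * r2 * F2 * (inverse F1 * F1)"
    by (simp add: left_diff_distrib right_diff_distrib mult_ac)
  also have "\<dots> = C * r1 * F1 - C * r2 * F2" using assms by simp
  finally show ?thesis .
qed

lemma fld_div: fixes r F G C H :: "'a::field"
  assumes "G \<noteq> 0" "F * G = C * r * H"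
  shows "F = C * (r * inverse G) * H"
proof -
  have "F = F * (G * inverse G)" using assms by simp
  also have "\<dots> = (F * G) * inverse G" by (simp only: mult.assoc)
  also have "\<dots> = C * (r * inverse G) * H" using assms(2) by (simp add: mult_ac)
  finally show ?thesis .
qed

lemma fld_step: fixes D E x F :: "'a::field"
  assumes "E \<noteq> 0"
  shows "D * x * F * E + D * F = (D * E) * (x + inverse E) * F"
proof -
  have "(D * E) * (x + inverse E) * F = D * x * F * E + D * F * (E * inverse E)"
    by (simp add: distrib_left distrib_right mult_ac)
  also have "\<dots> = D * x * F * E + D * F" using assms by simp
  finally show ?thesis by simp
qed

lemma emb_diff: "emb (a - b) = emb a - emb b"
  unfolding emb_def by simp

lemma hull_memI: "(\<And>H. factroid H \<Longrightarrow> S \<subseteq> H \<Longrightarrow> x \<in> H) \<Longrightarrow> x \<in> factroid_hull S"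
  unfolding factroid_hull_def by blast

lemma hull_memD: "x \<in> factroid_hull S \<Longrightarrow> factroid H \<Longrightarrow> S \<subseteq> H \<Longrightarrow> x \<in> H"
  unfolding factroid_hull_def by blast

lemma factroidD:
  assumes "factroid H"
  shows "0 \<in> H" "a \<in> H \<Longrightarrow> b \<in> H \<Longrightarrow> a + b \<in> H" "a \<in> H \<Longrightarrow> b \<in> H \<Longrightarrow> a - b \<in> H"
    "f \<noteq> 0 \<Longrightarrow> g \<noteq> 0 \<Longrightarrow> f * g \<in> H \<Longrightarrow> f \<in> H" "f \<noteq> 0 \<Longrightarrow> g \<noteq> 0 \<Longrightarrow> f * g \<in> H \<Longrightarrow> g \<in> H"
  using assms unfolding factroid_def by blast+

lemma factroidI:
  assumes "0 \<in> H" "\<And>a b. a \<in> H \<Longrightarrow> b \<in> H \<Longrightarrow> a + b \<in> H" "\<And>a b. a \<in> H \<Longrightarrow> b \<in> H \<Longrightarrow> a - b \<in> H"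
    "\<And>f g. f \<noteq> 0 \<Longrightarrow> g \<noteq> 0 \<Longrightarrow> f * g \<in> H \<Longrightarrow> f \<in> H \<and> g \<in> H"
  shows "factroid H"
  using assms unfolding factroid_def by blast

lemma factroid_hull_factroid: "factroid (factroid_hull (S :: 'a::idom set))"
proof (rule factroidI)
  show "0 \<in> factroid_hull S" by (rule hull_memI) (rule factroidD(1))
next
  fix a b :: 'a assume a: "a \<in> factroid_hull S" and b: "b \<in> factroid_hull S"
  show "a + b \<in> factroid_hull S"
  proof (rule hull_memI)
    fix H assume H: "factroid H" "S \<subseteq> H"
    show "a + b \<in> H" using factroidD(2)[OF H(1) hull_memD[OF a H] hull_memD[OF b H]] .
  qed
  show "a - b \<in> factroid_hull S"
  proof (rule hull_memI)
    fix H assume H: "factroid H" "S \<subseteq> H"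
    show "a - b \<in> H" using factroidD(3)[OF H(1) hull_memD[OF a H] hull_memD[OF b H]] .
  qed
next
  fix f g :: 'a assume f: "f \<noteq> 0" and g: "g \<noteq> 0" and fg: "f * g \<in> factroid_hull S"
  have "f \<in> factroid_hull S"
  proof (rule hull_memI)
    fix H assume H: "factroid H" "S \<subseteq> H"
    show "f \<in> H" using factroidD(4)[OF H(1) f g hull_memD[OF fg H]] .
  qed
  moreover have "g \<in> factroid_hull S"
  proof (rule hull_memI)
    fix H assume H: "factroid H" "S \<subseteq> H"
    show "g \<in> H" using factroidD(5)[OF H(1) f g hull_memD[OF fg H]] .
  qed
  ultimately show "f \<in> factroid_hull S \<and> g \<in> factroid_hull S" ..
qed

lemma factroid_hull_sub: "S \<subseteq> factroid_hull S"
  unfolding factroid_hull_def by blast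

lemma factroid_hull_least: "factroid H \<Longrightarrow> S \<subseteq> H \<Longrightarrow> factroid_hull S \<subseteq> H"
  unfolding factroid_hull_def by blast

definition GWc :: "'a::idom \<Rightarrow> 'a set \<Rightarrow> 'a set" where
  "GWc c W = {z. \<exists>f\<in>W - {0}. \<exists>r\<in>RR. emb z = emb c * r * emb f}"

lemma GWcI: "f \<in> W \<Longrightarrow> f \<noteq> 0 \<Longrightarrow> r \<in> RR \<Longrightarrow> emb z = emb c * r * emb f \<Longrightarrow> z \<in> GWc c W"
  unfolding GWc_def by blast

lemma GWcE: "z \<in> GWc c W \<Longrightarrow> (\<And>f r. f \<in> W \<Longrightarrow> f \<noteq> 0 \<Longrightarrow> r \<in> RR \<Longrightarrow> emb z = emb c * r * emb f \<Longrightarrow> P) \<Longrightarrow> P"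
  unfolding GWc_def by blast

lemma pow_W:
  assumes W1: "1 \<in> W" and Wm: "\<forall>a\<in>W. \<forall>b\<in>W. a * b \<in> W" and f: "f \<in> W"
  shows "f ^ K \<in> W"
proof (induction K)
  case 0 then show ?case using W1 by simp
next
  case (Suc K) then show ?case using Wm f by simp
qed

lemma GWc_factroid:
  fixes W :: "'a::idom set"
  assumes W1: "1 \<in> W" and Wm: "\<forall>a\<in>W. \<forall>b\<in>W. a * b \<in> W"
  shows "factroid (GWc c W)"
proof (rule factroidI)
  have sR: "subr (RR :: 'a fract set)" by (rule subr_RR)
  have "emb 0 = emb c * 0 * emb (1::'a)" by (simp add: emb_0)
  then show "0 \<in> GWc c W" using GWcI[OF W1 _ subr0[OF sR]] by simp
next
  have sR: "subr (RR :: 'a fract set)" by (rule subr_RR)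
  fix a b assume a: "a \<in> GWc c W" and b: "b \<in> GWc c W"
  obtain f1 r1 where h1: "f1 \<in> W" "f1 \<noteq> 0" "r1 \<in> RR" "emb a = emb c * r1 * emb f1"
    using GWcE[OF a] by blast
  obtain f2 r2 where h2: "f2 \<in> W" "f2 \<noteq> 0" "r2 \<in> RR" "emb b = emb c * r2 * emb f2"
    using GWcE[OF b] by blast
  have f12: "f1 * f2 \<in> W" "f1 * f2 \<noteq> 0" using h1 h2 Wm by auto
  have e1: "emb f1 \<noteq> 0" "emb f2 \<noteq> 0" using h1 h2 emb_eq0 by auto
  have i1: "r1 * inverse (emb f2) \<in> RR" by (rule subr_mult[OF sR h1(3) inv_emb_RR])
  have i2: "r2 * inverse (emb f1) \<in> RR" by (rule subr_mult[OF sR h2(3) inv_emb_RR])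
  have "emb (a + b) = emb c * (r1 * inverse (emb f2) + r2 * inverse (emb f1)) * emb (f1 * f2)"
    unfolding emb_add emb_mult h1(4) h2(4) by (rule fld_add[OF e1, symmetric])
  then show "a + b \<in> GWc c W" by (rule GWcI[OF f12 subr_add[OF sR i1 i2]])
  have "emb (a - b) = emb c * (r1 * inverse (emb f2) - r2 * inverse (emb f1)) * emb (f1 * f2)"
    unfolding emb_diff emb_mult h1(4) h2(4) by (rule fld_diff[OF e1, symmetric])
  then show "a - b \<in> GWc c W" by (rule GWcI[OF f12 subr_diff[OF sR i1 i2]])
next
  have sR: "subr (RR :: 'a fract set)" by (rule subr_RR)
  fix f g :: 'a assume f: "f \<noteq> 0" and g: "g \<noteq> 0" and fg: "f * g \<in> GWc c W"
  obtain h r where h: "h \<in> W" "h \<noteq> 0" "r \<in> RR" "emb (f * g) = emb c * r * emb h"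
    using GWcE[OF fg] by blast
  have e: "emb f \<noteq> 0" "emb g \<noteq> 0" using f g emb_eq0 by auto
  have h3: "emb f * emb g = emb c * r * emb h" "emb g * emb f = emb c * r * emb h"
    using h(4) unfolding emb_mult by (simp_all add: mult.commute)
  have "emb f = emb c * (r * inverse (emb g)) * emb h" by (rule fld_div[OF e(2) h3(1)])
  moreover have "emb g = emb c * (r * inverse (emb f)) * emb h" by (rule fld_div[OF e(1) h3(2)])
  moreover have "r * inverse (emb g) \<in> RR" "r * inverse (emb f) \<in> RR"
    using subr_mult[OF sR h(3) inv_emb_RR] by auto
  ultimately show "f \<in> GWc c W \<and> g \<in> GWc c W" using GWcI[OF h(1) h(2)] by blast
qed

lemma W_GWc:
  fixes W :: "'a::idom set"
  assumes W1: "1 \<in> W"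
  shows "W \<subseteq> GWc 1 W"
proof
  fix w assume w: "w \<in> W"
  have sR: "subr (RR :: 'a fract set)" by (rule subr_RR)
  show "w \<in> GWc 1 W"
  proof (cases "w = 0")
    case True
    have "emb w = emb 1 * 0 * emb (1::'a)" using True by (simp add: emb_0)
    then show ?thesis using GWcI[OF W1 _ subr0[OF sR]] by simp
  next
    case False
    have "emb w = emb 1 * 1 * emb w" by (simp add: emb_1)
    then show ?thesis using GWcI[OF w False subr1[OF sR]] by simp
  qed
qed

lemma GWc_regular:
  fixes W :: "'a::idom set"
  assumes W1: "1 \<in> W" and Wm: "\<forall>a\<in>W. \<forall>b\<in>W. a * b \<in> W"
  shows "regular_factroid (GWc 1 W)"
  unfolding regular_factroid_def
proof (intro conjI allI impI)
  show "factroid (GWc 1 W)" using GWc_factroid[OF W1 Wm] .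
  fix g :: 'a assume g0: "g \<noteq> 0"
  have sub: "(\<lambda>h. g * h) ` GWc 1 W \<subseteq> GWc g W"
  proof
    fix z assume "z \<in> (\<lambda>h. g * h) ` GWc 1 W"
    then obtain y where y: "y \<in> GWc 1 W" "z = g * y" by blast
    obtain f r where h: "f \<in> W" "f \<noteq> 0" "r \<in> RR" "emb y = emb 1 * r * emb f"
      using GWcE[OF y(1)] by blast
    have "emb z = emb g * r * emb f" using y(2) h(4) by (simp add: emb_mult emb_1 mult_ac)
    then show "z \<in> GWc g W" by (rule GWcI[OF h(1) h(2) h(3)])
  qed
  have hull: "factroid_hull ((\<lambda>h. g * h) ` GWc 1 W) \<subseteq> GWc g W"
    using factroid_hull_least[OF GWc_factroid[OF W1 Wm] sub] .
  show "{y. g * y \<in> factroid_hull ((\<lambda>h. g * h) ` GWc 1 W)} = GWc 1 W"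
  proof
    show "{y. g * y \<in> factroid_hull ((\<lambda>h. g * h) ` GWc 1 W)} \<subseteq> GWc 1 W"
    proof
      fix y assume "y \<in> {y. g * y \<in> factroid_hull ((\<lambda>h. g * h) ` GWc 1 W)}"
      then have "g * y \<in> GWc g W" using hull by blast
      then obtain f r where h: "f \<in> W" "f \<noteq> 0" "r \<in> RR" "emb (g * y) = emb g * r * emb f"
        using GWcE by blast
      have eg: "emb g \<noteq> 0" using g0 emb_eq0 by auto
      have "emb g * emb y = emb g * (r * emb f)" using h(4) unfolding emb_mult by (simp add: mult.assoc)
      then have "emb y = r * emb f" using eg by simp
      then have "emb y = emb 1 * r * emb f" by (simp add: emb_1)
      then show "y \<in> GWc 1 W" by (rule GWcI[OF h(1) h(2) h(3)])
    qed
    show "GWc 1 W \<subseteq> {y. g * y \<in> factroid_hull ((\<lambda>h. g * h) ` GWc 1 W)}"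
    proof
      fix y assume "y \<in> GWc 1 W"
      then have "g * y \<in> (\<lambda>h. g * h) ` GWc 1 W" by blast
      then show "y \<in> {y. g * y \<in> factroid_hull ((\<lambda>h. g * h) ` GWc 1 W)}"
        using factroid_hull_sub by blast
    qed
  qed
qed

lemma shift_factroid:
  assumes K: "factroid K" and e0: "(e :: 'a::idom) \<noteq> 0"
  shows "factroid {u. u * e \<in> K}"
proof (rule factroidI)
  show "0 \<in> {u. u * e \<in> K}" using factroidD(1)[OF K] by simp
next
  fix a b assume "a \<in> {u. u * e \<in> K}" "b \<in> {u. u * e \<in> K}"
  then have ab: "a * e \<in> K" "b * e \<in> K" by auto
  have "(a + b) * e \<in> K" unfolding distrib_right using factroidD(2)[OF K ab] .
  then show "a + b \<in> {u. u * e \<in> K}" by simp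
  have "(a - b) * e \<in> K" unfolding left_diff_distrib using factroidD(3)[OF K ab] .
  then show "a - b \<in> {u. u * e \<in> K}" by simp
next
  fix f g :: 'a assume f: "f \<noteq> 0" and g: "g \<noteq> 0" and fg: "f * g \<in> {u. u * e \<in> K}"
  then have k: "f * (g * e) \<in> K" "(f * e) * g \<in> K" by (simp_all add: mult_ac)
  have "g * e \<noteq> 0" "f * e \<noteq> 0" using f g e0 by auto
  then have "g * e \<in> K" "f * e \<in> K" using factroidD(5)[OF K f _ k(1)] factroidD(4)[OF K _ g k(2)] by auto
  then show "f \<in> {u. u * e \<in> K} \<and> g \<in> {u. u * e \<in> K}" by simp
qed

lemma zlemma:
  assumes f0: "(f :: 'a::idom) \<noteq> 0" and r: "r \<in> usum (range emb)"
  shows "\<exists>d z. d \<noteq> 0 \<and> emb z = emb d * r * emb f \<and> (\<forall>K. factroid K \<and> d * f \<in> K \<longrightarrow> z \<in> K)"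
  using r
proof (induction r rule: usum.induct)
  case usum_zero
  have "emb 0 = emb 1 * 0 * emb f" by (simp add: emb_0)
  moreover have "\<forall>K. factroid K \<and> 1 * f \<in> K \<longrightarrow> 0 \<in> K" using factroidD(1) by blast
  moreover have "(1::'a) \<noteq> 0" by simp
  ultimately show ?case by blast
next
  case (usum_step x e)
  then obtain d' z' where h: "d' \<noteq> 0" "emb z' = emb d' * x * emb f"
    "\<forall>K. factroid K \<and> d' * f \<in> K \<longrightarrow> z' \<in> K" by blast
  obtain e0 where e: "e = emb e0" using usum_step(2) by blast
  then have e0: "e0 \<noteq> 0" using usum_step(3) emb_0 by auto
  have ee0: "emb e0 \<noteq> 0" using e0 emb_eq0 by auto
  define d where "d = d' * e0"
  define z where "z = z' * e0 + d' * f"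
  have "d \<noteq> 0" unfolding d_def using h(1) e0 by simp
  moreover have "emb z = emb d * (x + inverse e) * emb f"
    unfolding z_def d_def e emb_add emb_mult h(2) by (rule fld_step[OF ee0])
  moreover have "z \<in> K" if K: "factroid K" "d * f \<in> K" for K
  proof -
    have "factroid {u. u * e0 \<in> K}" using shift_factroid[OF K(1) e0] .
    moreover have df: "(d' * f) * e0 \<in> K" using K(2) unfolding d_def by (simp add: mult_ac)
    moreover have "d' * f \<in> {u. u * e0 \<in> K}" using df by simp
    ultimately have "z' \<in> {u. u * e0 \<in> K}" using h(3) by blast
    then have "z' * e0 \<in> K" by simp
    moreover have "d' * f \<in> K"
    proof -
      have "d' * f \<noteq> 0" using h(1) f0 by simp
      then show ?thesis using factroidD(4)[OF K(1) _ e0 df] by blast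
    qed
    ultimately show ?thesis unfolding z_def using factroidD(2)[OF K(1)] by blast
  qed
  ultimately show ?case by blast
qed

lemma G_of_eq:
  fixes W :: "'a::idom set"
  assumes W1: "1 \<in> W" and Wm: "\<forall>a\<in>W. \<forall>b\<in>W. a * b \<in> W"
  shows "G_of W = GWc 1 W"
proof
  have "GWc 1 W \<in> {H. regular_factroid H \<and> W \<subseteq> H}"
    using GWc_regular[OF W1 Wm] W_GWc[OF W1] by blast
  then show "G_of W \<subseteq> GWc 1 W" unfolding G_of_def by (rule Inter_lower)
  show "GWc 1 W \<subseteq> G_of W"
  proof
    fix y assume y: "y \<in> GWc 1 W"
    obtain f r where h: "f \<in> W" "f \<noteq> 0" "r \<in> RR" "emb y = emb 1 * r * emb f"
      using GWcE[OF y] by blast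
    have rU: "r \<in> usum (range emb)" using h(3) unfolding RR_def .
    obtain d z where dz: "d \<noteq> 0" "emb z = emb d * r * emb f"
      "\<forall>K. factroid K \<and> d * f \<in> K \<longrightarrow> z \<in> K"
      using zlemma[OF h(2) rU] by blast
    have zdy: "z = d * y"
    proof -
      have "emb z = emb (d * y)" unfolding emb_mult dz(2) using h(4) by (simp add: emb_1 mult_ac)
      then show ?thesis using emb_inj by blast
    qed
    show "y \<in> G_of W" unfolding G_of_def
    proof (rule InterI)
      fix H assume "H \<in> {H. regular_factroid H \<and> W \<subseteq> H}"
      then have H: "regular_factroid H" "W \<subseteq> H" by auto
      let ?hull = "factroid_hull ((\<lambda>h. d * h) ` H)"
      have "d * f \<in> ?hull" using factroid_hull_sub H(2) h(1) by blast
      then have "z \<in> ?hull" using dz(3) factroid_hull_factroid by blast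
      then have "y \<in> {y. d * y \<in> ?hull}" using zdy by simp
      moreover have "{y. d * y \<in> ?hull} = H" using H(1) dz(1) unfolding regular_factroid_def by blast
      ultimately show "y \<in> H" by simp
    qed
  qed
qed



lemma pf_mono:
  assumes f0: "(f :: 'a::idom) \<noteq> 0" and g0: "g \<noteq> 0"
  shows "pf (f * g) \<subseteq> pf f"
proof (rule pf_max[OF f0 pf_prime])
  have fg0: "f * g \<noteq> 0" using f0 g0 by simp
  show "Fract 1 f \<notin> pf (f * g)"
  proof
    assume h: "Fract 1 f \<in> pf (f * g)"
    have "Fract 1 g \<in> recip_compl" using Fract_RR g0 unfolding recip_compl_RR by blast
    then have "Fract 1 g * Fract 1 f \<in> pf (f * g)"
      using pf_prime[of "f * g"] h unfolding prime_ideal_of_def by blast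
    moreover have "Fract 1 g * Fract 1 f = Fract 1 (f * g)" by (simp add: mult.commute)
    ultimately show False using pf_avoid[OF fg0] by simp
  qed
qed

lemma unit_iff:
  assumes x0: "(x :: 'a::idom) \<noteq> 0"
  shows "Fract 1 x \<notin> pf f \<longleftrightarrow> emb x \<in> usum (Ef f)"
proof -
  have R: "Fract 1 x \<in> usum (Ef f)" using Fract_RR x0 RR_Af[of f] by blast
  have R2: "Fract 1 x \<in> RR" using Fract_RR x0 by blast
  have nz: "Fract 1 x \<noteq> 0" unfolding Fract1 using x0 emb_eq0 by auto
  have inv: "inverse (Fract 1 x) = emb x" unfolding Fract1 by simp
  show ?thesis unfolding pf_def nonunits_def using R R2 nz inv by auto
qed

theorem mainTheorem14:
  fixes W :: "'a::idom set" and x :: 'a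
  assumes "1 \<in> W"
    and "\<forall>a\<in>W. \<forall>b\<in>W. a * b \<in> W"
    and "x \<noteq> 0"
  shows "prime_ideal_of recip_compl (p_W W) \<and> (Fract 1 x \<notin> p_W W \<longleftrightarrow> x \<in> G_of W)"
proof -
  note W1 = assms(1) and Wm = assms(2) and x0 = assms(3)
  have pW: "p_W W = (\<Inter>f\<in>W - {0}. pf f)" unfolding p_W_def using p_of_eq by auto
  have one: "(1::'a) \<in> W - {0}" using W1 by simp
  have prm: "prime_ideal_of recip_compl (pf f)" for f :: 'a by (rule pf_prime)
  have prime: "prime_ideal_of recip_compl (\<Inter>f\<in>W - {0}. pf f)"
    unfolding prime_ideal_of_def
  proof (intro conjI ballI impI)
    show "(\<Inter>f\<in>W - {0}. pf f) \<subseteq> recip_compl" using prm[of 1] one unfolding prime_ideal_of_def by blast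
    show "0 \<in> (\<Inter>f\<in>W - {0}. pf f)" using prm unfolding prime_ideal_of_def by blast
    show "1 \<notin> (\<Inter>f\<in>W - {0}. pf f)" using prm[of 1] one unfolding prime_ideal_of_def by blast
  next
    fix a b :: "'a fract" assume a: "a \<in> (\<Inter>f\<in>W - {0}. pf f)" and b: "b \<in> (\<Inter>f\<in>W - {0}. pf f)"
    show "a + b \<in> (\<Inter>f\<in>W - {0}. pf f)"
    proof
      fix f :: 'a assume "f \<in> W - {0}"
      then have "a \<in> pf f" "b \<in> pf f" using a b by auto
      then show "a + b \<in> pf f" using prm[of f] unfolding prime_ideal_of_def by blast
    qed
    show "a - b \<in> (\<Inter>f\<in>W - {0}. pf f)"
    proof
      fix f :: 'a assume "f \<in> W - {0}"
      then have "a \<in> pf f" "b \<in> pf f" using a b by auto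
      then show "a - b \<in> pf f" using prm[of f] unfolding prime_ideal_of_def by blast
    qed
  next
    fix r a :: "'a fract" assume r: "r \<in> recip_compl" and a: "a \<in> (\<Inter>f\<in>W - {0}. pf f)"
    show "r * a \<in> (\<Inter>f\<in>W - {0}. pf f)"
    proof
      fix f :: 'a assume "f \<in> W - {0}"
      then have "a \<in> pf f" using a by auto
      then show "r * a \<in> pf f" using prm[of f] r unfolding prime_ideal_of_def by blast
    qed
  next
    fix a b :: "'a fract" assume a: "a \<in> recip_compl" and b: "b \<in> recip_compl"
      and ab: "a * b \<in> (\<Inter>f\<in>W - {0}. pf f)"
    show "a \<in> (\<Inter>f\<in>W - {0}. pf f) \<or> b \<in> (\<Inter>f\<in>W - {0}. pf f)"
    proof (rule ccontr)
      assume "\<not> ?thesis"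
      then obtain f g where f: "f \<in> W - {0}" "a \<notin> pf f" and g: "g \<in> W - {0}" "b \<notin> pf g" by blast
      have fg: "f * g \<in> W - {0}" using f g Wm by auto
      then have "a * b \<in> pf (f * g)" using ab by blast
      then have "a \<in> pf (f * g) \<or> b \<in> pf (f * g)" using prm[of "f * g"] a b
        unfolding prime_ideal_of_def by blast
      moreover have "pf (f * g) \<subseteq> pf f" using pf_mono f g by auto
      moreover have "pf (f * g) \<subseteq> pf g" using pf_mono[of g f] f g by (auto simp: mult.commute)
      ultimately show False using f g by blast
    qed
  qed
  have "Fract 1 x \<notin> (\<Inter>f\<in>W - {0}. pf f) \<longleftrightarrow> (\<exists>f\<in>W - {0}. emb x \<in> usum (Ef f))"
    using unit_iff[OF x0] by blast
  also have "\<dots> \<longleftrightarrow> x \<in> GWc 1 W"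
  proof
    assume "\<exists>f\<in>W - {0}. emb x \<in> usum (Ef f)"
    then obtain f where f: "f \<in> W" "f \<noteq> 0" "emb x \<in> usum (Ef f)" by blast
    obtain K r where r: "r \<in> RR" "emb x = r * emb f ^ K" using Af_repr[OF f(2) f(3)] by blast
    have "f ^ K \<in> W" using pow_W[OF W1 Wm f(1)] .
    moreover have "f ^ K \<noteq> 0" using f(2) by simp
    moreover have "emb x = emb 1 * r * emb (f ^ K)" using r(2) by (simp add: emb_1 emb_pow)
    ultimately show "x \<in> GWc 1 W" using GWcI r(1) by blast
  next
    assume "x \<in> GWc 1 W"
    then obtain f r where h: "f \<in> W" "f \<noteq> 0" "r \<in> RR" "emb x = emb 1 * r * emb f"
      using GWcE by blast
    have sA: "subr (usum (Ef f))" by (rule usum_subr[OF subr_Ef])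
    have "r \<in> usum (Ef f)" using h(3) RR_Af by blast
    then have "r * emb f \<in> usum (Ef f)" using subr_mult[OF sA _ emb_f_Af[OF h(2)]] by blast
    moreover have "emb x = r * emb f" using h(4) by (simp add: emb_1)
    ultimately show "\<exists>f\<in>W - {0}. emb x \<in> usum (Ef f)" using h(1,2) by auto
  qed
  also have "\<dots> \<longleftrightarrow> x \<in> G_of W" using G_of_eq[OF W1 Wm] by simp
  finally show ?thesis using prime unfolding pW by blast
qed


end
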